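(* For every $n\ge1$, the elements $z_{2k}$, $k=0,\dots,\lfloor\frac{n-1}{2}\rfloor$, together with the elementary symmetric polynomials $\sigma_{2k}$, $k=1,\dots,\lfloor\frac n2\rfloor$, form an algebraically independent set of generators of the ring $\mathbb C[x_1,\dots,x_n]^{S_n}$ of symmetric polynomials.
   Context: $U(\mathfrak h_n)$ is the associative superalgebra generated by odd elements $\xi_1,\dots,\xi_n$ with $\xi_i\xi_j+\xi_j\xi_i=0$ for $i\neq j$; $x_i=\xi_i^2$ are central. Let $T$ be the $\mathbb C[x_1,\dots,x_n]$-linear endomorphism of the free $\mathbb C[x_1,\dots,x_n]$-module with basis $\xi_1,\dots,\xi_n$ given by $T(\xi_j)=\sum_i t_{ij}\xi_i$ with $t_{ii}=0$, $t_{ij}=x_j$ for $i<j$, $t_{ij}=-x_j$ for $i>j$. Put $\phi_0=\sum_i\xi_i$, $\phi_k=T^k(\phi_0)$, and $z_{2k}=\frac12(\phi_0\phi_{2k}+\phi_{2k}\phi_0)\in\mathbb C[x_1,\dots,x_n]$. $\sigma_p$ denotes the $p$-th elementary symmetric polynomial in $x_1,\dots,x_n$. *)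

theory Defs
  imports Complex_Main "HOL-Library.Poly_Mapping" "HOL-Combinatorics.Permutations"
begin

type_synonym 'v mpoly = "('v \<Rightarrow>\<^sub>0 nat) \<Rightarrow>\<^sub>0 complex"

definition Var :: "'v \<Rightarrow> 'v mpoly" where
  "Var i = Poly_Mapping.single (Poly_Mapping.single i 1) 1"

definition Const :: "complex \<Rightarrow> 'v mpoly" where
  "Const c = Poly_Mapping.single 0 c"

definition vars :: "'v mpoly \<Rightarrow> 'v set" where
  "vars p = (\<Union>m\<in>Poly_Mapping.keys p. Poly_Mapping.keys m)"

definition subst :: "('v \<Rightarrow> 'w mpoly) \<Rightarrow> 'v mpoly \<Rightarrow> 'w mpoly" where
  "subst f p = (\<Sum>m\<in>Poly_Mapping.keys p. Const (Poly_Mapping.lookup p m) *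
     (\<Prod>i\<in>Poly_Mapping.keys m. f i ^ Poly_Mapping.lookup m i))"

text \<open>The ring C[x_1,...,x_n]^{S_n}; variable x_{i+1} is Var i, i < n.\<close>
definition sym_polys :: "nat \<Rightarrow> nat mpoly set" where
  "sym_polys n = {p. vars p \<subseteq> {..<n} \<and>
      (\<forall>\<pi>. \<pi> permutes {..<n} \<longrightarrow> subst (\<lambda>i. Var (\<pi> i)) p = p)}"

definition esym :: "nat \<Rightarrow> nat \<Rightarrow> nat mpoly" where
  "esym n p = (\<Sum>S\<in>{S. S \<subseteq> {..<n} \<and> card S = p}. \<Prod>i\<in>S. Var i)"

text \<open>Elements of the free C[x]-module with basis xi_1..xi_n, as coefficient vectors
  (index i < n stands for xi_{i+1}).  Matrix entries t_ij of T.\<close>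
definition tT :: "nat \<Rightarrow> nat \<Rightarrow> nat mpoly" where
  "tT i j = (if i < j then Var j else if j < i then - Var j else 0)"

definition Tmap :: "nat \<Rightarrow> (nat \<Rightarrow> nat mpoly) \<Rightarrow> (nat \<Rightarrow> nat mpoly)" where
  "Tmap n v = (\<lambda>i. \<Sum>j<n. tT i j * v j)"

definition phi :: "nat \<Rightarrow> nat \<Rightarrow> (nat \<Rightarrow> nat mpoly)" where
  "phi n k = (Tmap n ^^ k) (\<lambda>i. 1)"

text \<open>Anticommutator a b + b a of two odd elements a = sum a_i xi_i, b = sum b_i xi_i in
  U(h_n): by the relations xi_i xi_j + xi_j xi_i = 0 (i ~= j), xi_i^2 = x_i it equals
  sum_i 2 a_i b_i x_i.\<close>
definition anticomm :: "nat \<Rightarrow> (nat \<Rightarrow> nat mpoly) \<Rightarrow> (nat \<Rightarrow> nat mpoly) \<Rightarrow> nat mpoly" where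
  "anticomm n a b = (\<Sum>i<n. 2 * a i * b i * Var i)"

text \<open>z_{m} = 1/2 (phi_0 phi_m + phi_m phi_0); the paper's z_{2k} is zz n (2*k).\<close>
definition zz :: "nat \<Rightarrow> nat \<Rightarrow> nat mpoly" where
  "zz n m = Const (1/2) * anticomm n (phi n 0) (phi n m)"

end

theory Submission
  imports Defs "HOL-Computational_Algebra.Formal_Power_Series"
begin


abbreviation lk where "lk \<equiv> Poly_Mapping.lookup"
abbreviation ks where "ks \<equiv> Poly_Mapping.keys"
abbreviation sg where "sg \<equiv> Poly_Mapping.single"

definition mon :: "('v \<Rightarrow> 'w mpoly) \<Rightarrow> ('v \<Rightarrow>\<^sub>0 nat) \<Rightarrow> 'w mpoly" where
  "mon f m = (\<Prod>i\<in>ks m. f i ^ lk m i)"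

lemma mon_superset:
  assumes "finite K" "ks m \<subseteq> K"
  shows "mon f m = (\<Prod>i\<in>K. f i ^ lk m i)"
  unfolding mon_def
  by (rule prod.mono_neutral_left) (use assms in \<open>auto simp: in_keys_iff\<close>)

lemma mon_add: "mon f (a + b) = mon f a * mon f b"
proof -
  let ?K = "ks a \<union> ks b"
  have "mon f (a+b) = (\<Prod>i\<in>?K. f i ^ lk (a+b) i)"
    by (rule mon_superset) (auto dest: subsetD[OF keys_add])
  also have "\<dots> = (\<Prod>i\<in>?K. f i ^ lk a i * f i ^ lk b i)"
    by (simp add: lookup_add power_add)
  also have "\<dots> = mon f a * mon f b"
    by (simp add: prod.distrib mon_superset[of ?K])
  finally show ?thesis .
qed

lemma mon_zero [simp]: "mon f 0 = 1"
  by (simp add: mon_def)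

lemma Const_zero [simp]: "Const 0 = 0"
  by (simp add: Const_def)

lemma Const_one [simp]: "Const 1 = 1"
  by (simp add: Const_def)

lemma Const_add: "Const (a + b) = Const a + Const b"
  by (simp add: Const_def single_add)

lemma Const_mult: "Const (a * b) = Const a * Const b"
  by (simp add: Const_def mult_single)

lemma Const_uminus: "Const (- a) = - Const a"
  by (simp add: Const_def single_uminus)

lemma lookup_Const_mult: "lk (Const c * q) m = c * lk q m"
proof -
  have "Const c * q = Poly_Mapping.map ((*) c) q"
    by (simp add: Const_def mult_map_scale_conv_mult)
  then show ?thesis by (simp add: map.rep_eq when_def)
qed

lemma subst_superset:
  assumes "finite K" "ks p \<subseteq> K"
  shows "subst f p = (\<Sum>m\<in>K. Const (lk p m) * mon f m)"
  unfolding subst_def mon_def[symmetric]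
  by (rule sum.mono_neutral_left) (use assms in \<open>auto simp: in_keys_iff\<close>)

lemma subst_add: "subst f (p + q) = subst f p + subst f q"
proof -
  let ?K = "ks p \<union> ks q"
  have "subst f (p+q) = (\<Sum>m\<in>?K. Const (lk (p+q) m) * mon f m)"
    by (rule subst_superset) (auto dest: subsetD[OF keys_add])
  also have "\<dots> = (\<Sum>m\<in>?K. Const (lk p m) * mon f m + Const (lk q m) * mon f m)"
    by (simp add: lookup_add Const_add algebra_simps)
  also have "\<dots> = subst f p + subst f q"
    by (simp add: sum.distrib subst_superset[of ?K])
  finally show ?thesis .
qed

lemma subst_zero [simp]: "subst f 0 = 0"
  by (simp add: subst_def)

lemma subst_uminus: "subst f (- p) = - subst f p"
  by (metis add.right_inverse add_eq_0_iff subst_add subst_zero)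

lemma subst_diff: "subst f (p - q) = subst f p - subst f q"
  by (metis diff_conv_add_uminus subst_add subst_uminus)

lemma subst_sum: "subst f (\<Sum>i\<in>A. g i) = (\<Sum>i\<in>A. subst f (g i))"
  by (induction A rule: infinite_finite_induct) (auto simp: subst_add)

lemma subst_single: "subst f (sg m c) = Const c * mon f m"
  by (simp add: subst_def mon_def)

lemma poly_expand: "p = (\<Sum>m\<in>ks p. sg m (lk p m))"
  by (rule poly_mapping_eqI)
     (simp add: lookup_sum lookup_single when_def in_keys_iff sum.delta' split: if_splits)

lemma subst_as_sum: "subst f p = (\<Sum>m\<in>ks p. Const (lk p m) * mon f m)"
  by (simp add: subst_def mon_def)

lemma subst_mult: "subst f (p * q) = subst f p * subst f q"
proof -
  have "p * q = (\<Sum>m\<in>ks p. sg m (lk p m)) * (\<Sum>m'\<in>ks q. sg m' (lk q m'))"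
    using poly_expand[of p] poly_expand[of q] by simp
  also have "\<dots> = (\<Sum>m\<in>ks p. \<Sum>m'\<in>ks q. sg (m + m') (lk p m * lk q m'))"
    by (simp add: sum_product mult_single)
  finally have "subst f (p*q) = (\<Sum>m\<in>ks p. \<Sum>m'\<in>ks q. Const (lk p m * lk q m') * mon f (m + m'))"
    by (simp add: subst_sum subst_single)
  also have "\<dots> = (\<Sum>m\<in>ks p. \<Sum>m'\<in>ks q. (Const (lk p m) * mon f m) * (Const (lk q m') * mon f m'))"
    by (simp add: Const_mult mon_add algebra_simps)
  also have "\<dots> = subst f p * subst f q"
    by (simp add: subst_as_sum sum_product)
  finally show ?thesis .
qed

lemma subst_one [simp]: "subst f 1 = 1"
  by (metis Const_one mon_zero mult_1 single_one subst_single Const_def)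

lemma subst_Const [simp]: "subst f (Const c) = Const c"
  by (simp add: Const_def subst_single)

lemma subst_Var [simp]: "subst f (Var i) = f i"
  by (simp add: Var_def subst_single mon_def)

lemma subst_power: "subst f (p ^ k) = subst f p ^ k"
  by (induction k) (auto simp: subst_mult)

lemma subst_prod: "subst f (\<Prod>i\<in>A. g i) = (\<Prod>i\<in>A. subst f (g i))"
  by (induction A rule: infinite_finite_induct) (auto simp: subst_mult)

lemma subst_mon: "subst f (mon g m) = mon (\<lambda>i. subst f (g i)) m"
  by (simp add: mon_def subst_prod subst_power)

lemma subst_subst: "subst f (subst g q) = subst (\<lambda>i. subst f (g i)) q"
  by (simp add: subst_as_sum[of g] subst_as_sum[of "\<lambda>i. subst f (g i)"] subst_sum subst_mult subst_mon)

lemma Var_power: "Var i ^ k = sg (sg i k) 1"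
  by (induction k) (auto simp: Var_def mult_single single_add[symmetric] add.commute)

lemma prod_single: "(\<Prod>i\<in>A. sg (g i) (1::complex)) = sg (\<Sum>i\<in>A. g i) 1"
  by (induction A rule: infinite_finite_induct) (auto simp: mult_single)

lemma mon_Var: "mon Var m = sg m 1"
proof -
  have "mon Var m = (\<Prod>i\<in>ks m. sg (sg i (lk m i)) 1)"
    by (simp add: mon_def Var_power)
  also have "\<dots> = sg (\<Sum>i\<in>ks m. sg i (lk m i)) 1"
    by (rule prod_single)
  also have "\<dots> = sg m 1"
    using poly_expand[of m] by simp
  finally show ?thesis .
qed




lemma subst_Var_id [simp]: "subst Var p = p"
proof -
  have "subst Var p = (\<Sum>m\<in>ks p. sg m (lk p m))"
    by (simp add: subst_as_sum mon_Var Const_def mult_single)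
  then show ?thesis using poly_expand[of p] by simp
qed

lemma subst_cong:
  assumes "\<And>i. i \<in> vars p \<Longrightarrow> f i = g i"
  shows "subst f p = subst g p"
proof -
  have "\<And>m i. m \<in> ks p \<Longrightarrow> i \<in> ks m \<Longrightarrow> f i = g i"
    using assms by (auto simp: vars_def)
  then show ?thesis unfolding subst_def
    by (intro sum.cong refl arg_cong[where f="\<lambda>x. _ * x"] prod.cong) auto
qed

lemma keys_sub_vars: "m \<in> ks p \<Longrightarrow> ks m \<subseteq> vars p"
  unfolding vars_def by (rule UN_upper)

lemma vars_add: "vars (p + q) \<subseteq> vars p \<union> vars q"
proof
  fix i assume "i \<in> vars (p + q)"
  then obtain m where m: "m \<in> ks (p+q)" "i \<in> ks m" by (auto simp: vars_def)
  have "m \<in> ks p \<union> ks q" using keys_add m(1) by (rule subsetD)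
  then show "i \<in> vars p \<union> vars q" using m(2) keys_sub_vars[of m p] keys_sub_vars[of m q] by auto
qed

lemma vars_uminus [simp]: "vars (- p) = vars p"
  by (simp add: vars_def)

lemma vars_diff: "vars (p - q) \<subseteq> vars p \<union> vars q"
  using vars_add[of p "- q"] by simp

lemma vars_mult: "vars (p * q) \<subseteq> vars p \<union> vars q"
proof
  fix i assume "i \<in> vars (p * q)"
  then obtain m where m: "m \<in> ks (p*q)" "i \<in> ks m" by (auto simp: vars_def)
  have "m \<in> {a + b |a b. a \<in> ks p \<and> b \<in> ks q}" using keys_mult m(1) by (rule subsetD)
  then obtain a b where ab: "a \<in> ks p" "b \<in> ks q" "m = a + b" by auto
  have "i \<in> ks a \<or> i \<in> ks b" using m(2) keys_add[of a b] ab(3) by auto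
  then show "i \<in> vars p \<union> vars q"
  proof
    assume "i \<in> ks a" then show ?thesis using keys_sub_vars[OF ab(1)] by auto
  next
    assume "i \<in> ks b" then show ?thesis using keys_sub_vars[OF ab(2)] by auto
  qed
qed
lemma vars_zero [simp]: "vars 0 = {}"
  by (simp add: vars_def)

lemma vars_Const [simp]: "vars (Const c) = {}"
  by (simp add: vars_def Const_def)

lemma vars_one [simp]: "vars 1 = {}"
  by (simp add: vars_def)

lemma vars_Var [simp]: "vars (Var i) = {i}"
  by (simp add: vars_def Var_def)

lemma vars_sum: "vars (\<Sum>i\<in>A. g i) \<subseteq> (\<Union>i\<in>A. vars (g i))"
proof (induction A rule: infinite_finite_induct)
  case (insert x F)
  then show ?case using vars_add[of "g x" "sum g F"] by auto
qed auto

lemma vars_prod: "vars (\<Prod>i\<in>A. g i) \<subseteq> (\<Union>i\<in>A. vars (g i))"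
proof (induction A rule: infinite_finite_induct)
  case (insert x F)
  then show ?case using vars_mult[of "g x" "prod g F"] by auto
qed auto

lemma vars_power: "vars (p ^ k) \<subseteq> vars p"
proof (induction k)
  case (Suc k)
  then show ?case using vars_mult[of p "p^k"] by auto
qed auto

lemma vars_subst: "vars (subst f p) \<subseteq> (\<Union>i\<in>vars p. vars (f i))"
proof -
  have "vars (subst f p) \<subseteq> (\<Union>m\<in>ks p. vars (Const (lk p m) * mon f m))"
    unfolding subst_as_sum by (rule vars_sum)
  also have "\<dots> \<subseteq> (\<Union>m\<in>ks p. vars (mon f m))"
    using vars_mult[of "Const _" "mon f _"] by auto
  also have "\<dots> \<subseteq> (\<Union>m\<in>ks p. \<Union>i\<in>ks m. vars (f i ^ lk m i))"
    unfolding mon_def by (rule UN_mono) (simp_all add: vars_prod)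
  also have "\<dots> \<subseteq> (\<Union>m\<in>ks p. \<Union>i\<in>ks m. vars (f i))"
    by (intro UN_mono) (simp_all add: vars_power)
  also have "\<dots> = (\<Union>i\<in>vars p. vars (f i))"
    unfolding vars_def by (rule UN_UN_flatten[symmetric])
  finally show ?thesis .
qed

lemma generation:
  assumes "\<And>v. v \<in> V \<Longrightarrow> \<exists>r. vars r \<subseteq> W \<and> subst g r = Var v"
    and "vars q \<subseteq> V"
  shows "\<exists>r. vars r \<subseteq> W \<and> subst g r = q"
proof -
  define h where "h v = (SOME r. vars r \<subseteq> W \<and> subst g r = Var v)" for v
  have h: "vars (h v) \<subseteq> W \<and> subst g (h v) = Var v" if "v \<in> V" for v
    unfolding h_def by (rule someI_ex) (rule assms(1)[OF that])
  have "subst g (subst h q) = subst (\<lambda>i. subst g (h i)) q" by (rule subst_subst)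
  also have "\<dots> = subst Var q"
  proof (rule subst_cong)
    fix i assume "i \<in> vars q"
    then have "i \<in> V" using assms(2) by auto
    then show "subst g (h i) = Var i" using h by simp
  qed
  finally have "subst g (subst h q) = q" by simp
  moreover have "vars (subst h q) \<subseteq> W"
  proof -
    have "(\<Union>i\<in>vars q. vars (h i)) \<subseteq> W"
    proof (rule UN_least)
      fix i assume "i \<in> vars q"
      then have "i \<in> V" using assms(2) by auto
      then show "vars (h i) \<subseteq> W" using h by simp
    qed
    then show ?thesis by (rule order.trans[OF vars_subst])
  qed
  ultimately show ?thesis by (intro exI[of _ "subst h q"]) simp
qed




section \<open>Lex order facts\<close>

lemma less_pm_iff: "(f::nat \<Rightarrow>\<^sub>0 nat) < g \<longleftrightarrow> (\<exists>k. lk f k < lk g k \<and> (\<forall>k'<k. lk f k' = lk g k'))"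
  by (simp add: less_poly_mapping.rep_eq less_fun_def)

definition ind :: "nat set \<Rightarrow> (nat \<Rightarrow>\<^sub>0 nat)" where
  "ind S = (\<Sum>i\<in>S. sg i 1)"

lemma lookup_ind: "finite S \<Longrightarrow> lk (ind S) i = (if i \<in> S then 1 else 0)"
  by (simp add: ind_def lookup_sum lookup_single when_def)

lemma ind_inj: "finite S \<Longrightarrow> finite T \<Longrightarrow> ind S = ind T \<Longrightarrow> S = T"
proof -
  assume a: "finite S" "finite T" "ind S = ind T"
  have "i \<in> S \<longleftrightarrow> i \<in> T" for i
  proof -
    have "lk (ind S) i = lk (ind T) i" using a(3) by simp
    then show ?thesis unfolding lookup_ind[OF a(1)] lookup_ind[OF a(2)]
      by (cases "i \<in> S"; cases "i \<in> T") simp_all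
  qed
  then show ?thesis by auto
qed

lemma prod_Var: "(\<Prod>i\<in>S. Var i) = sg (ind S) 1"
  by (simp add: Var_def prod_single ind_def)

lemma ind_less:
  assumes "S \<subseteq> {..<n}" "card S = j" "S \<noteq> {..<j}"
  shows "ind S < ind {..<j}"
proof -
  have fS: "finite S" using assms(1) finite_subset by blast
  have "\<not> {..<j} \<subseteq> S"
  proof
    assume "{..<j} \<subseteq> S"
    then have "{..<j} = S" using card_subset_eq[OF fS] assms(2) by simp
    then show False using assms(3) by simp
  qed
  then obtain k0 where "k0 < j" "k0 \<notin> S" by auto
  define k where "k = (LEAST k. k < j \<and> k \<notin> S)"
  have k: "k < j \<and> k \<notin> S" unfolding k_def by (rule LeastI[of _ k0]) (use \<open>k0 < j\<close> \<open>k0 \<notin> S\<close> in simp)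
  have lt: "k' < k \<Longrightarrow> k' \<in> S" for k'
    using not_less_Least[of k' "\<lambda>k. k < j \<and> k \<notin> S"] k unfolding k_def[symmetric] by auto
  show ?thesis unfolding less_pm_iff
  proof (intro exI conjI allI impI)
    show "lk (ind S) k < lk (ind {..<j}) k" using k fS by (simp add: lookup_ind)
    fix k' assume "k' < k"
    then show "lk (ind S) k' = lk (ind {..<j}) k'" using lt[of k'] k fS by (simp add: lookup_ind)
  qed
qed

definition Sj :: "nat \<Rightarrow> nat \<Rightarrow> nat set set" where
  "Sj n j = {S. S \<subseteq> {..<n} \<and> card S = j}"

lemma finite_Sj: "finite (Sj n j)"
  unfolding Sj_def by (rule finite_subset[of _ "Pow {..<n}"]) auto

lemma esym_alt: "esym n j = (\<Sum>S\<in>Sj n j. sg (ind S) 1)"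
  by (simp add: esym_def Sj_def prod_Var)

lemma vars_esym: "vars (esym n j) \<subseteq> {..<n}"
proof -
  have "vars (esym n j) \<subseteq> (\<Union>S\<in>Sj n j. vars (\<Prod>i\<in>S. Var i))"
    unfolding esym_def Sj_def by (rule vars_sum)
  also have "\<dots> \<subseteq> (\<Union>S\<in>Sj n j. \<Union>i\<in>S. vars (Var i))"
    by (intro UN_mono order.refl vars_prod)
  also have "\<dots> \<subseteq> {..<n}" by (auto simp: Sj_def)
  finally show ?thesis .
qed

lemma esym_big: "j > n \<Longrightarrow> esym n j = 0"
proof -
  assume "j > n"
  have "Sj n j = {}"
  proof (rule equals0I)
    fix S assume "S \<in> Sj n j"
    then have S: "S \<subseteq> {..<n}" "card S = j" by (auto simp: Sj_def)
    have "card S \<le> card {..<n}" by (rule card_mono[OF _ S(1)]) simp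
    then show False using S(2) \<open>j > n\<close> by simp
  qed
  then show ?thesis by (simp add: esym_alt)
qed

lemma esym_0: "esym n 0 = 1"
proof -
  have "Sj n 0 = {{}}"
  proof (rule set_eqI)
    fix S
    show "S \<in> Sj n 0 \<longleftrightarrow> S \<in> {{}}"
    proof
      assume "S \<in> Sj n 0"
      then have S: "S \<subseteq> {..<n}" "card S = 0" by (auto simp: Sj_def)
      have "finite S" using S(1) finite_subset by auto
      then show "S \<in> {{}}" using S(2) by simp
    qed (simp add: Sj_def)
  qed
  then show ?thesis by (simp add: esym_alt ind_def)
qed


section \<open>Leading monomials\<close>

lemma keys_single_mult: "ks (sg \<mu> c * q) \<subseteq> (\<lambda>b. \<mu> + b) ` ks q"
proof
  fix x assume "x \<in> ks (sg \<mu> c * q)"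
  then have "x \<in> {a + b |a b. a \<in> ks (sg \<mu> c) \<and> b \<in> ks q}" by (rule subsetD[OF keys_mult])
  then show "x \<in> (\<lambda>b. \<mu> + b) ` ks q" by (auto split: if_splits)
qed

lemma lk_single_mult: "lk (sg \<mu> c * (q :: 'a mpoly)) (\<mu> + \<nu>) = c * lk q \<nu>"
proof -
  have "sg \<mu> c * q = sg \<mu> c * (\<Sum>b\<in>ks q. sg b (lk q b))"
    using poly_expand[of q] by simp
  also have "\<dots> = (\<Sum>b\<in>ks q. sg (\<mu> + b) (c * lk q b))"
    by (simp add: sum_distrib_left mult_single)
  finally have "lk (sg \<mu> c * q) (\<mu> + \<nu>) = (\<Sum>b\<in>ks q. (c * lk q b when b = \<nu>))"
    by (simp add: lookup_sum lookup_single)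
  also have "\<dots> = c * lk q \<nu>"
    by (cases "\<nu> \<in> ks q") (simp_all add: when_def in_keys_iff)
  finally show ?thesis .
qed

definition bnd :: "nat mpoly \<Rightarrow> (nat \<Rightarrow>\<^sub>0 nat) \<Rightarrow> bool" where
  "bnd p \<mu> \<longleftrightarrow> (\<forall>\<kappa>\<in>ks p. \<kappa> \<le> \<mu>)"

lemma bnd_mult: "bnd p \<mu> \<Longrightarrow> bnd q \<nu> \<Longrightarrow> bnd (p * q) (\<mu> + \<nu>)"
  unfolding bnd_def
proof
  fix x assume p: "\<forall>\<kappa>\<in>ks p. \<kappa> \<le> \<mu>" and q: "\<forall>\<kappa>\<in>ks q. \<kappa> \<le> \<nu>" and x: "x \<in> ks (p * q)"
  from x have "x \<in> {a + b |a b. a \<in> ks p \<and> b \<in> ks q}" by (rule subsetD[OF keys_mult])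
  then obtain a b where "a \<in> ks p" "b \<in> ks q" "x = a + b" by auto
  then show "x \<le> \<mu> + \<nu>" using p q by (simp add: add_mono)
qed

lemma bnd_lookup_zero: "bnd p \<mu> \<Longrightarrow> \<mu> < \<nu> \<Longrightarrow> lk p \<nu> = 0"
  unfolding bnd_def by (meson in_keys_iff leD)

lemma lead_mult:
  assumes "bnd p \<mu>" "bnd q \<nu>"
  shows "lk (p * q) (\<mu> + \<nu>) = lk p \<mu> * lk q \<nu>"
proof -
  define p1 where "p1 = p - sg \<mu> (lk p \<mu>)"
  have p1: "\<kappa> < \<mu>" if "\<kappa> \<in> ks p1" for \<kappa>
  proof -
    have l: "lk p1 \<kappa> \<noteq> 0" using that by (simp add: in_keys_iff)
    then have "\<kappa> \<noteq> \<mu>" by (auto simp: p1_def lookup_minus)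
    moreover have "\<kappa> \<in> ks p" using l by (auto simp: p1_def lookup_minus lookup_single when_def in_keys_iff split: if_splits)
    ultimately show ?thesis using assms(1) unfolding bnd_def by (simp add: order.not_eq_order_implies_strict)
  qed
  have "p = sg \<mu> (lk p \<mu>) + p1" by (simp add: p1_def)
  then have "p * q = sg \<mu> (lk p \<mu>) * q + p1 * q" by (metis distrib_right)
  moreover have "lk (p1 * q) (\<mu> + \<nu>) = 0"
  proof (rule ccontr)
    assume "lk (p1 * q) (\<mu> + \<nu>) \<noteq> 0"
    then have "\<mu> + \<nu> \<in> {a + b |a b. a \<in> ks p1 \<and> b \<in> ks q}" using keys_mult[of p1 q] by (auto simp: in_keys_iff)
    then obtain a b where ab: "a \<in> ks p1" "b \<in> ks q" "\<mu> + \<nu> = a + b" by auto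
    have "a + b < \<mu> + \<nu>" using p1[OF ab(1)] ab(2) assms(2) unfolding bnd_def by (simp add: add_less_le_mono)
    then show False using ab(3) by simp
  qed
  ultimately show ?thesis by (simp add: lookup_add lk_single_mult)
qed

definition rep :: "nat \<Rightarrow> (nat \<Rightarrow>\<^sub>0 nat) \<Rightarrow> (nat \<Rightarrow>\<^sub>0 nat)" where
  "rep k \<mu> = (\<Sum>r<k. \<mu>)"

lemma rep_Suc: "rep (Suc k) \<mu> = \<mu> + rep k \<mu>"
  unfolding rep_def by (simp only: sum.lessThan_Suc add.commute)

lemma lookup_rep: "lk (rep k \<mu>) i = k * lk \<mu> i"
  unfolding rep_def lookup_sum by simp

lemma bnd_one: "bnd 1 0"
  by (simp add: bnd_def)

lemma lead_power:
  assumes "bnd p \<mu>"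
  shows "bnd (p ^ k) (rep k \<mu>) \<and> lk (p ^ k) (rep k \<mu>) = lk p \<mu> ^ k"
proof (induction k)
  case 0
  then show ?case by (simp add: rep_def bnd_one)
next
  case (Suc k)
  then show ?case using bnd_mult[OF assms, of "p^k"] lead_mult[OF assms, of "p^k"]
    by (simp add: rep_Suc)
qed

lemma lead_prod:
  assumes "finite A" "\<And>j. j \<in> A \<Longrightarrow> bnd (f j) (\<mu> j)"
  shows "bnd (\<Prod>j\<in>A. f j) (\<Sum>j\<in>A. \<mu> j) \<and> lk (\<Prod>j\<in>A. f j) (\<Sum>j\<in>A. \<mu> j) = (\<Prod>j\<in>A. lk (f j) (\<mu> j))"
  using assms
proof (induction A rule: finite_induct)
  case empty
  then show ?case by (simp add: bnd_one)
next
  case (insert x F)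
  then have b: "bnd (f x) (\<mu> x)" and IH: "bnd (prod f F) (sum \<mu> F) \<and> lk (prod f F) (sum \<mu> F) = (\<Prod>j\<in>F. lk (f j) (\<mu> j))"
    by auto
  then show ?case using insert(1,2) bnd_mult[OF b, of "prod f F"] lead_mult[OF b, of "prod f F"]
    by simp
qed

lemma lookup_ind_lt: "lk (ind {..<j}) i = (if i < j then 1 else 0)"
  by (simp add: lookup_ind)

lemma lead_esym:
  assumes "j \<le> n"
  shows "bnd (esym n j) (ind {..<j}) \<and> lk (esym n j) (ind {..<j}) = 1"
proof
  show "bnd (esym n j) (ind {..<j})" unfolding bnd_def
  proof
    fix \<kappa> assume "\<kappa> \<in> ks (esym n j)"
    then have "\<kappa> \<in> (\<Union>S\<in>Sj n j. ks (sg (ind S) (1::complex)))"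
      unfolding esym_alt by (rule subsetD[OF keys_sum])
    then obtain S where S: "S \<in> Sj n j" "\<kappa> = ind S" by (auto split: if_splits)
    show "\<kappa> \<le> ind {..<j}"
    proof (cases "S = {..<j}")
      case True then show ?thesis using S by simp
    next
      case False then show ?thesis using S ind_less[of S n j] by (simp add: Sj_def)
    qed
  qed
  have "lk (esym n j) (ind {..<j}) = (\<Sum>S\<in>Sj n j. (1 when S = {..<j}))"
  proof -
    have "((1::complex) when ind S = ind {..<j}) = (1 when S = {..<j})" if "S \<in> Sj n j" for S
    proof -
      have "finite S" using that finite_subset unfolding Sj_def by auto
      then show ?thesis using ind_inj[of S "{..<j}"] by (auto simp: when_def)
    qed
    then show ?thesis unfolding esym_alt lookup_sum lookup_single by (intro sum.cong) auto
  qed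
  also have "\<dots> = 1"
  proof -
    have "{..<j} \<in> Sj n j" using assms by (auto simp: Sj_def)
    then show ?thesis using finite_Sj by (simp add: when_def)
  qed
  finally show "lk (esym n j) (ind {..<j}) = 1" .
qed


definition LM :: "(nat \<Rightarrow>\<^sub>0 nat) \<Rightarrow> (nat \<Rightarrow>\<^sub>0 nat)" where
  "LM a = (\<Sum>j\<in>ks a. rep (lk a j) (ind {..<j}))"

lemma lead_mon:
  assumes "ks a \<subseteq> {..n}"
  shows "bnd (mon (esym n) a) (LM a) \<and> lk (mon (esym n) a) (LM a) = 1"
proof -
  have "bnd (esym n j ^ lk a j) (rep (lk a j) (ind {..<j})) \<and>
        lk (esym n j ^ lk a j) (rep (lk a j) (ind {..<j})) = 1" if "j \<in> ks a" for j
  proof -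
    have "j \<le> n" using that assms by auto
    then show ?thesis using lead_power[of "esym n j" "ind {..<j}" "lk a j"] lead_esym[of j n] by simp
  qed
  then show ?thesis
    using lead_prod[of "ks a" "\<lambda>j. esym n j ^ lk a j" "\<lambda>j. rep (lk a j) (ind {..<j})"]
    unfolding mon_def LM_def by simp
qed

lemma lookup_LM: "lk (LM a) i = (\<Sum>j\<in>ks a. (lk a j when i < j))"
  unfolding LM_def lookup_sum lookup_rep lookup_ind_lt
  by (intro sum.cong) (auto simp: when_def)

lemma LM_rec: "lk (LM a) i = lk a (Suc i) + lk (LM a) (Suc i)"
proof -
  have "(\<Sum>j\<in>ks a. (lk a j when i < j)) = (\<Sum>j\<in>ks a. (lk a j when j = Suc i) + (lk a j when Suc i < j))"
    by (intro sum.cong) (auto simp: when_def)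
  also have "\<dots> = (\<Sum>j\<in>ks a. (lk a j when j = Suc i)) + (\<Sum>j\<in>ks a. (lk a j when Suc i < j))"
    by (rule sum.distrib)
  also have "(\<Sum>j\<in>ks a. (lk a j when j = Suc i)) = lk a (Suc i)"
    by (cases "Suc i \<in> ks a") (simp_all add: when_def in_keys_iff)
  finally show ?thesis by (simp add: lookup_LM)
qed

lemma LM_inj:
  assumes "0 \<notin> ks a" "0 \<notin> ks b" "LM a = LM b"
  shows "a = b"
proof (rule poly_mapping_eqI)
  fix k show "lk a k = lk b k"
  proof (cases k)
    case 0 then show ?thesis using assms(1,2) by (simp add: in_keys_iff)
  next
    case (Suc i)
    have "lk a (Suc i) = lk (LM a) i - lk (LM a) (Suc i)" using LM_rec[of a i] by simp
    moreover have "lk b (Suc i) = lk (LM b) i - lk (LM b) (Suc i)" using LM_rec[of b i] by simp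
    ultimately show ?thesis using Suc assms(3) by simp
  qed
qed

lemma keys_sub_vars': "m \<in> ks p \<Longrightarrow> i \<in> ks m \<Longrightarrow> i \<in> vars p"
  using keys_sub_vars by blast

lemma psi_zero:
  assumes "vars r \<subseteq> {1..n}" "subst (esym n) r = 0"
  shows "r = 0"
proof (rule ccontr)
  assume "r \<noteq> 0"
  then have ne: "ks r \<noteq> {}" by simp
  define L where "L = Max (LM ` ks r)"
  have "L \<in> LM ` ks r" unfolding L_def using ne by (intro Max_in) auto
  then obtain a where a: "a \<in> ks r" "LM a = L" by auto
  have kb: "0 \<notin> ks b \<and> ks b \<subseteq> {..n}" if "b \<in> ks r" for b
  proof -
    have "i \<in> {1..n}" if "i \<in> ks b" for i using keys_sub_vars'[OF \<open>b \<in> ks r\<close> that] assms(1) by auto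
    then show ?thesis by force
  qed
  have other: "lk (mon (esym n) b) L = 0" if "b \<in> ks r" "b \<noteq> a" for b
  proof -
    have "LM b \<le> L" unfolding L_def using that(1) by (intro Max_ge) auto
    moreover have "LM b \<noteq> L" using LM_inj[of b a] kb[OF that(1)] kb[OF a(1)] a(2) that(2) by auto
    ultimately have "LM b < L" by simp
    then show ?thesis using lead_mon[of b n] kb[OF that(1)] bnd_lookup_zero by blast
  qed
  have "lk (subst (esym n) r) L = (\<Sum>b\<in>ks r. lk r b * lk (mon (esym n) b) L)"
    unfolding subst_as_sum lookup_sum lookup_Const_mult ..
  also have "\<dots> = lk r a * lk (mon (esym n) a) L + (\<Sum>b\<in>ks r - {a}. lk r b * lk (mon (esym n) b) L)"
    using a(1) by (simp add: sum.remove)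
  also have "(\<Sum>b\<in>ks r - {a}. lk r b * lk (mon (esym n) b) L) = 0"
    using other by (intro sum.neutral) auto
  also have "lk (mon (esym n) a) L = 1" using lead_mon[of a n] kb[OF a(1)] a(2) by simp
  finally have "lk (subst (esym n) r) L = lk r a" by simp
  then show False using assms(2) a(1) by (simp add: in_keys_iff)
qed




section \<open>Permutation action\<close>

definition pm :: "(nat \<Rightarrow> nat) \<Rightarrow> (nat \<Rightarrow>\<^sub>0 nat) \<Rightarrow> (nat \<Rightarrow>\<^sub>0 nat)" where
  "pm \<pi> m = (\<Sum>i\<in>ks m. sg (\<pi> i) (lk m i))"

lemma mon_perm: "mon (\<lambda>i. Var (\<pi> i)) m = sg (pm \<pi> m) 1"
  unfolding mon_def pm_def Var_power by (rule prod_single)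

lemma lookup_pm:
  assumes "bij \<pi>"
  shows "lk (pm \<pi> m) k = lk m (inv \<pi> k)"
proof -
  have eq: "(\<pi> i = k) = (i = inv \<pi> k)" for i
    using assms by (metis bij_inv_eq_iff)
  have "lk (pm \<pi> m) k = (\<Sum>i\<in>ks m. (lk m i when i = inv \<pi> k))"
    unfolding pm_def lookup_sum lookup_single by (simp add: eq)
  also have "\<dots> = lk m (inv \<pi> k)"
    by (cases "inv \<pi> k \<in> ks m") (simp_all add: when_def in_keys_iff)
  finally show ?thesis .
qed

lemma pm_inj:
  assumes "bij \<pi>" "pm \<pi> a = pm \<pi> b"
  shows "a = b"
proof (rule poly_mapping_eqI)
  fix i
  have "lk a i = lk (pm \<pi> a) (\<pi> i)" using assms(1) by (simp add: lookup_pm bij_is_inj)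
  also have "\<dots> = lk (pm \<pi> b) (\<pi> i)" using assms(2) by simp
  also have "\<dots> = lk b i" using assms(1) by (simp add: lookup_pm bij_is_inj)
  finally show "lk a i = lk b i" .
qed

lemma lookup_perm_subst:
  assumes "bij \<pi>"
  shows "lk (subst (\<lambda>i. Var (\<pi> i)) p) (pm \<pi> \<mu>) = lk p \<mu>"
proof -
  have "subst (\<lambda>i. Var (\<pi> i)) p = (\<Sum>m\<in>ks p. sg (pm \<pi> m) (lk p m))"
    unfolding subst_as_sum mon_perm by (simp add: Const_def mult_single)
  then have "lk (subst (\<lambda>i. Var (\<pi> i)) p) (pm \<pi> \<mu>) = (\<Sum>m\<in>ks p. (lk p m when pm \<pi> m = pm \<pi> \<mu>))"
    by (simp add: lookup_sum lookup_single)
  also have "\<dots> = (\<Sum>m\<in>ks p. (lk p m when m = \<mu>))"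
    using pm_inj[OF assms] by (intro sum.cong) (auto simp: when_def)
  also have "\<dots> = lk p \<mu>"
    by (cases "\<mu> \<in> ks p") (simp_all add: when_def in_keys_iff)
  finally show ?thesis .
qed

lemma esym_perm:
  assumes "\<pi> permutes {..<n}"
  shows "subst (\<lambda>i. Var (\<pi> i)) (esym n j) = esym n j"
proof -
  have inj: "inj_on \<pi> S" for S using permutes_inj[OF assms] by (rule inj_on_subset) simp
  have "subst (\<lambda>i. Var (\<pi> i)) (esym n j) = (\<Sum>S\<in>Sj n j. \<Prod>i\<in>S. Var (\<pi> i))"
    unfolding esym_def Sj_def by (simp add: subst_sum subst_prod)
  also have "\<dots> = (\<Sum>S\<in>Sj n j. \<Prod>i\<in>\<pi> ` S. Var i)"
    using inj by (simp add: prod.reindex)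
  also have "\<dots> = (\<Sum>S\<in>Sj n j. \<Prod>i\<in>S. Var i)"
  proof (rule sum.reindex_bij_witness[where i="\<lambda>S. inv \<pi> ` S" and j="\<lambda>S. \<pi> ` S"])
    fix S assume S: "S \<in> Sj n j"
    show "inv \<pi> ` \<pi> ` S = S" using permutes_inverses(2)[OF assms] by (simp add: image_comp)
    show "\<pi> ` S \<in> Sj n j" using S permutes_image[OF assms] inj[of S] card_image[OF inj[of S]]
      unfolding Sj_def by (auto dest: permutes_in_image[OF assms, THEN iffD2])
  next
    fix S assume S: "S \<in> Sj n j"
    show "\<pi> ` inv \<pi> ` S = S" using permutes_inverses(1)[OF assms] by (simp add: image_comp)
    have pinv: "inv \<pi> permutes {..<n}" by (rule permutes_inv[OF assms])
    have "inj_on (inv \<pi>) S" using permutes_inj[OF pinv] by (rule inj_on_subset) simp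
    moreover have "inv \<pi> ` S \<subseteq> {..<n}"
    proof -
      have "inv \<pi> ` S \<subseteq> inv \<pi> ` {..<n}" using S unfolding Sj_def by (intro image_mono) simp
      then show ?thesis using permutes_image[OF pinv] by simp
    qed
    ultimately show "inv \<pi> ` S \<in> Sj n j" using S card_image unfolding Sj_def by auto
  qed simp
  also have "\<dots> = esym n j" unfolding esym_def Sj_def ..
  finally show ?thesis .
qed

lemma psi_sym: "subst (esym n) r \<in> sym_polys n"
  unfolding sym_polys_def
proof (intro CollectI conjI allI impI)
  show "vars (subst (esym n) r) \<subseteq> {..<n}"
  proof (rule order.trans[OF vars_subst])
    show "(\<Union>i\<in>vars r. vars (esym n i)) \<subseteq> {..<n}" using vars_esym by (simp add: UN_least)
  qed
  fix \<pi> :: "nat \<Rightarrow> nat" assume "\<pi> permutes {..<n}"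
  then show "subst (\<lambda>i. Var (\<pi> i)) (subst (esym n) r) = subst (esym n) r"
    by (simp add: subst_subst esym_perm)
qed

lemma sym_diff: "p \<in> sym_polys n \<Longrightarrow> q \<in> sym_polys n \<Longrightarrow> p - q \<in> sym_polys n"
  unfolding sym_polys_def using vars_diff[of p q] by (auto simp: subst_diff)


lemma keys_sym_bound: "p \<in> sym_polys n \<Longrightarrow> \<mu> \<in> ks p \<Longrightarrow> i \<in> ks \<mu> \<Longrightarrow> i < n"
proof -
  assume a: "p \<in> sym_polys n" "\<mu> \<in> ks p" "i \<in> ks \<mu>"
  have "vars p \<subseteq> {..<n}" using a(1) by (simp add: sym_polys_def)
  moreover have "i \<in> vars p" using a(2,3) by (rule keys_sub_vars')
  ultimately show "i < n" by auto
qed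

lemma sym_max_antitone:
  assumes p: "p \<in> sym_polys n" and mu: "\<mu> \<in> ks p" and mx: "\<forall>\<nu>\<in>ks p. \<nu> \<le> \<mu>"
  shows "lk \<mu> (Suc i) \<le> lk \<mu> i"
proof (rule ccontr)
  assume "\<not> lk \<mu> (Suc i) \<le> lk \<mu> i"
  then have lt: "lk \<mu> i < lk \<mu> (Suc i)" by simp
  then have "Suc i \<in> ks \<mu>" by (simp add: in_keys_iff)
  then have "Suc i < n" by (rule keys_sym_bound[OF p mu])
  define \<pi> where "\<pi> = Transposition.transpose i (Suc i)"
  have perm: "\<pi> permutes {..<n}" unfolding \<pi>_def using \<open>Suc i < n\<close> by (intro permutes_swap_id) auto
  have bij: "bij \<pi>" by (rule permutes_bij[OF perm])
  have invp: "inv \<pi> = \<pi>" unfolding \<pi>_def by (rule inv_transpose_eq)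
  define \<nu> where "\<nu> = pm \<pi> \<mu>"
  have lnu: "lk \<nu> k = lk \<mu> (\<pi> k)" for k unfolding \<nu>_def lookup_pm[OF bij] invp ..
  have "lk p \<nu> = lk (subst (\<lambda>i. Var (\<pi> i)) p) \<nu>"
    using p perm unfolding sym_polys_def by simp
  also have "\<dots> = lk p \<mu>" unfolding \<nu>_def by (rule lookup_perm_subst[OF bij])
  finally have "\<nu> \<in> ks p" using mu by (simp add: in_keys_iff)
  then have "\<nu> \<le> \<mu>" using mx by simp
  moreover have "\<mu> < \<nu>" unfolding less_pm_iff
  proof (intro exI conjI allI impI)
    show "lk \<mu> i < lk \<nu> i" unfolding lnu \<pi>_def using lt by simp
    fix k' assume "k' < i"
    then show "lk \<mu> k' = lk \<nu> k'" unfolding lnu \<pi>_def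
      by (simp add: transpose_apply_other)
  qed
  ultimately show False by simp
qed

definition amu :: "nat \<Rightarrow> (nat \<Rightarrow>\<^sub>0 nat) \<Rightarrow> (nat \<Rightarrow>\<^sub>0 nat)" where
  "amu n \<mu> = (\<Sum>j\<in>{1..n}. sg j (lk \<mu> (j - 1) - lk \<mu> j))"

lemma lookup_amu: "lk (amu n \<mu>) j = (if j \<in> {1..n} then lk \<mu> (j - 1) - lk \<mu> j else 0)"
proof -
  have "lk (amu n \<mu>) j = (\<Sum>j'\<in>{1..n}. (lk \<mu> (j' - 1) - lk \<mu> j' when j' = j))"
    unfolding amu_def lookup_sum lookup_single by (intro sum.cong) (auto simp: when_def)
  also have "\<dots> = (if j \<in> {1..n} then lk \<mu> (j - 1) - lk \<mu> j else 0)"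
    by (simp add: when_def)
  finally show ?thesis .
qed

lemma keys_amu: "ks (amu n \<mu>) \<subseteq> {1..n}"
proof
  fix j assume "j \<in> ks (amu n \<mu>)"
  then show "j \<in> {1..n}" unfolding in_keys_iff lookup_amu by (auto split: if_splits)
qed

lemma LM_amu:
  assumes anti: "\<And>i. lk \<mu> (Suc i) \<le> lk \<mu> i" and bound: "\<And>i. i \<in> ks \<mu> \<Longrightarrow> i < n"
  shows "LM (amu n \<mu>) = \<mu>"
proof (rule poly_mapping_eqI)
  fix i
  show "lk (LM (amu n \<mu>)) i = lk \<mu> i"
  proof (induction "n - i" arbitrary: i)
    case 0
    then have "n \<le> i" by simp
    have "lk (LM (amu n \<mu>)) i = 0" unfolding lookup_LM
    proof (intro sum.neutral ballI)
      fix j assume "j \<in> ks (amu n \<mu>)"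
      then have "j \<le> n" using keys_amu by fastforce
      then show "(lk (amu n \<mu>) j when i < j) = 0" using \<open>n \<le> i\<close> by (simp add: when_def)
    qed
    moreover have "lk \<mu> i = 0" using bound[of i] \<open>n \<le> i\<close> by (auto simp: in_keys_iff)
    ultimately show ?case by simp
  next
    case (Suc d)
    then have "i < n" "d = n - Suc i" by auto
    then have IH: "lk (LM (amu n \<mu>)) (Suc i) = lk \<mu> (Suc i)" using Suc(1)[of "Suc i"] by simp
    have "lk (LM (amu n \<mu>)) i = lk (amu n \<mu>) (Suc i) + lk (LM (amu n \<mu>)) (Suc i)" by (rule LM_rec)
    also have "\<dots> = (lk \<mu> i - lk \<mu> (Suc i)) + lk \<mu> (Suc i)"
      using \<open>i < n\<close> IH by (simp add: lookup_amu)
    also have "\<dots> = lk \<mu> i" using anti[of i] by simp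
    finally show ?case .
  qed
qed


definition Rn :: "nat \<Rightarrow> ((nat \<Rightarrow>\<^sub>0 nat) \<times> (nat \<Rightarrow>\<^sub>0 nat)) set" where
  "Rn n = {(\<nu>, \<mu>). \<nu> < \<mu> \<and> ks \<nu> \<subseteq> {..<n} \<and> ks \<mu> \<subseteq> {..<n}}"

lemma wf_Rn: "wf (Rn n)"
proof (rule wf_subset[OF wf_inv_image[OF wf_lex[OF wf_less_than]]])
  show "Rn n \<subseteq> inv_image (lex less_than) (\<lambda>\<mu>. map (lk \<mu>) [0..<n])"
  proof
    fix x assume "x \<in> Rn n"
    then obtain \<nu> \<mu> where x: "x = (\<nu>, \<mu>)" "\<nu> < \<mu>" "ks \<nu> \<subseteq> {..<n}" "ks \<mu> \<subseteq> {..<n}"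
      unfolding Rn_def by auto
    then obtain k where k: "lk \<nu> k < lk \<mu> k" "\<forall>k'<k. lk \<nu> k' = lk \<mu> k'"
      unfolding less_pm_iff by auto
    then have "k \<in> ks \<mu>" by (simp add: in_keys_iff)
    then have "k < n" using x(4) by auto
    then have up: "[0..<n] = [0..<k] @ k # [Suc k..<n]"
      using upt_add_eq_append[of 0 k "n - k"] upt_conv_Cons[of k n] by simp
    have eq: "map (lk \<nu>) [0..<k] = map (lk \<mu>) [0..<k]" using k(2) by simp
    have "(map (lk \<nu>) [0..<n], map (lk \<mu>) [0..<n]) \<in> lex less_than"
      unfolding lex_conv up
      by (rule CollectI, unfold case_prod_conv, intro conjI exI[of _ "map (lk \<nu>) [0..<k]"] exI)
         (use eq k(1) in auto)
    then show "x \<in> inv_image (lex less_than) (\<lambda>\<mu>. map (lk \<mu>) [0..<n])" using x(1) by simp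
  qed
qed

lemma vars_single: "vars (sg a c) \<subseteq> ks a"
  by (simp add: vars_def)

lemma ftsp_exists:
  assumes "p \<in> sym_polys n"
  shows "\<exists>r. vars r \<subseteq> {1..n} \<and> subst (esym n) r = p"
proof -
  have main: "ks \<mu> \<subseteq> {..<n} \<longrightarrow> (\<forall>p. p \<in> sym_polys n \<longrightarrow> p \<noteq> 0 \<longrightarrow> Max (ks p) = \<mu> \<longrightarrow>
      (\<exists>r. vars r \<subseteq> {1..n} \<and> subst (esym n) r = p))" for \<mu>
    using wf_Rn[of n]
  proof (induction \<mu> rule: wf_induct_rule)
    case (less \<mu>)
    show ?case
    proof (intro impI allI)
      fix p assume kmu: "ks \<mu> \<subseteq> {..<n}" and p: "p \<in> sym_polys n" and pnz: "p \<noteq> 0" and mx: "Max (ks p) = \<mu>"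
      have mu: "\<mu> \<in> ks p" using pnz mx Max_in[of "ks p"] by auto
      have le: "\<forall>\<nu>\<in>ks p. \<nu> \<le> \<mu>" using mx by auto
      define a where "a = amu n \<mu>"
      have LMa: "LM a = \<mu>" unfolding a_def
        by (rule LM_amu) (use sym_max_antitone[OF p mu le] keys_sym_bound[OF p mu] in auto)
      have ka: "ks a \<subseteq> {1..n}" unfolding a_def by (rule keys_amu)
      then have ka': "ks a \<subseteq> {..n}" by auto
      define c where "c = lk p \<mu>"
      define q where "q = sg a c"
      have vq: "vars q \<subseteq> {1..n}" unfolding q_def using vars_single ka by (rule order.trans)
      have Pq: "subst (esym n) q = Const c * mon (esym n) a" unfolding q_def by (rule subst_single)
      define p' where "p' = p - subst (esym n) q"
      have p'sym: "p' \<in> sym_polys n" unfolding p'_def using p psi_sym by (rule sym_diff)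
      have lead: "bnd (mon (esym n) a) \<mu> \<and> lk (mon (esym n) a) \<mu> = 1" using lead_mon[OF ka'] LMa by simp
      have lkp': "lk p' \<kappa> = lk p \<kappa> - c * lk (mon (esym n) a) \<kappa>" for \<kappa>
        unfolding p'_def Pq lookup_minus lookup_Const_mult ..
      have ltmu: "\<kappa> < \<mu>" if "\<kappa> \<in> ks p'" for \<kappa>
      proof -
        have nz: "lk p' \<kappa> \<noteq> 0" using that by (simp add: in_keys_iff)
        have "\<kappa> \<le> \<mu>"
        proof (cases "lk p \<kappa> = 0")
          case True
          then have "lk (mon (esym n) a) \<kappa> \<noteq> 0" using nz lkp' by auto
          then show ?thesis using lead unfolding bnd_def by (simp add: in_keys_iff)
        next
          case False
          then show ?thesis using le by (simp add: in_keys_iff)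
        qed
        moreover have "\<kappa> \<noteq> \<mu>" using nz lkp'[of \<mu>] lead by (auto simp: c_def)
        ultimately show ?thesis by simp
      qed
      show "\<exists>r. vars r \<subseteq> {1..n} \<and> subst (esym n) r = p"
      proof (cases "p' = 0")
        case True
        then have "subst (esym n) q = p" unfolding p'_def by simp
        then show ?thesis using vq by blast
      next
        case False
        define \<mu>' where "\<mu>' = Max (ks p')"
        have mu': "\<mu>' \<in> ks p'" using False Max_in[of "ks p'"] unfolding \<mu>'_def by auto
        have kmu': "ks \<mu>' \<subseteq> {..<n}" using keys_sym_bound[OF p'sym mu'] by auto
        have "(\<mu>', \<mu>) \<in> Rn n" unfolding Rn_def using ltmu[OF mu'] kmu' kmu by auto
        then obtain r' where r': "vars r' \<subseteq> {1..n}" "subst (esym n) r' = p'"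
          using less[of \<mu>'] kmu' p'sym False \<mu>'_def by blast
        have "subst (esym n) (r' + q) = p" using r'(2) by (simp add: subst_add p'_def)
        moreover have "vars (r' + q) \<subseteq> {1..n}" using vars_add[of r' q] r'(1) vq by auto
        ultimately show ?thesis by blast
      qed
    qed
  qed
  show ?thesis
  proof (cases "p = 0")
    case True
    then show ?thesis by (intro exI[of _ 0]) simp
  next
    case False
    have "Max (ks p) \<in> ks p" using False Max_in[of "ks p"] by auto
    then have "ks (Max (ks p)) \<subseteq> {..<n}" using keys_sym_bound[OF assms] by auto
    then show ?thesis using main[of "Max (ks p)"] assms False by blast
  qed
qed




section \<open>Recurrence for elementary symmetric polynomials\<close>

lemma esym_Suc:
  "esym (Suc n) (Suc j) = esym n (Suc j) + Var n * esym n j"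
proof -
  define f where "f S = (\<Prod>i\<in>S. Var i :: nat mpoly)" for S
  define A where "A = {S. S \<subseteq> {..<n} \<and> card S = Suc j}"
  define B where "B = {S. S \<subseteq> {..<Suc n} \<and> n \<in> S \<and> card S = Suc j}"
  have split: "{S. S \<subseteq> {..<Suc n} \<and> card S = Suc j} = A \<union> B"
  proof (rule set_eqI)
    fix S
    show "S \<in> {S. S \<subseteq> {..<Suc n} \<and> card S = Suc j} \<longleftrightarrow> S \<in> A \<union> B"
    proof
      assume S: "S \<in> {S. S \<subseteq> {..<Suc n} \<and> card S = Suc j}"
      show "S \<in> A \<union> B"
      proof (cases "n \<in> S")
        case True then show ?thesis using S by (simp add: B_def)
      next
        case False
        then have "S \<subseteq> {..<n}" using S by (auto simp: less_Suc_eq)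
        then show ?thesis using S by (simp add: A_def)
      qed
    next
      assume "S \<in> A \<union> B"
      then show "S \<in> {S. S \<subseteq> {..<Suc n} \<and> card S = Suc j}" by (auto simp: A_def B_def)
    qed
  qed
  have finA: "finite A" unfolding A_def by (rule finite_subset[of _ "Pow {..<n}"]) auto
  have finB: "finite B" unfolding B_def by (rule finite_subset[of _ "Pow {..<Suc n}"]) auto
  have disj: "A \<inter> B = {}" by (auto simp: A_def B_def)
  have "esym (Suc n) (Suc j) = sum f A + sum f B"
    unfolding esym_def f_def[symmetric] split using finA finB disj by (rule sum.union_disjoint)
  moreover have "sum f A = esym n (Suc j)" unfolding esym_def A_def f_def ..
  moreover have "sum f B = (\<Sum>S\<in>Sj n j. f (insert n S))"
  proof (rule sum.reindex_bij_witness[where i="insert n" and j="\<lambda>S. S - {n}"])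
    fix S assume "S \<in> B"
    then have S: "S \<subseteq> {..<Suc n}" "n \<in> S" "card S = Suc j" by (auto simp: B_def)
    show "insert n (S - {n}) = S" using S(2) by auto
    have "finite S" using S(1) finite_subset by blast
    moreover have "S - {n} \<subseteq> {..<n}" using S(1) by (auto simp: less_Suc_eq)
    ultimately show "S - {n} \<in> Sj n j" using S(2,3) by (simp add: Sj_def)
  next
    fix S assume "S \<in> Sj n j"
    then have S: "S \<subseteq> {..<n}" "card S = j" by (auto simp: Sj_def)
    have nS: "n \<notin> S" using S(1) by auto
    have fS: "finite S" using S(1) finite_subset by blast
    show "insert n S - {n} = S" using nS by simp
    show "insert n S \<in> B" using S nS fS unfolding B_def by auto
  qed (simp add: B_def insert_absorb)
  moreover have "(\<Sum>S\<in>Sj n j. f (insert n S)) = Var n * esym n j"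
  proof -
    have "f (insert n S) = Var n * f S" if "S \<in> Sj n j" for S
    proof -
      have "finite S" "n \<notin> S" using that finite_subset unfolding Sj_def by auto
      then show ?thesis unfolding f_def by simp
    qed
    then have "(\<Sum>S\<in>Sj n j. f (insert n S)) = (\<Sum>S\<in>Sj n j. Var n * f S)" by (rule sum.cong[OF refl])
    also have "\<dots> = Var n * esym n j" unfolding esym_def Sj_def f_def by (simp add: sum_distrib_left)
    finally show ?thesis .
  qed
  ultimately show ?thesis by simp
qed

section \<open>Power series\<close>

definition Fv :: "nat \<Rightarrow> nat \<Rightarrow> nat mpoly fps" where
  "Fv n i = Abs_fps (\<lambda>m. phi n m i)"

definition Zs :: "nat \<Rightarrow> nat mpoly fps" where
  "Zs n = (\<Sum>i<n. fps_const (Var i) * Fv n i)"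

definition Evf :: "nat \<Rightarrow> nat mpoly fps" where
  "Evf n = Abs_fps (\<lambda>j. if even j then esym n j else 0)"

definition Odf :: "nat \<Rightarrow> nat mpoly fps" where
  "Odf n = Abs_fps (\<lambda>j. if odd j then esym n j else 0)"

lemma phi_0: "phi n 0 i = 1"
  by (simp add: phi_def)

lemma phi_Suc: "phi n (Suc m) i = (\<Sum>j<n. tT i j * phi n m j)"
  by (simp add: phi_def Tmap_def)

lemma Fv_eq: "Fv n i = 1 + fps_X * (\<Sum>j<n. fps_const (tT i j) * Fv n j)"
proof (rule fps_ext)
  fix m show "fps_nth (Fv n i) m = fps_nth (1 + fps_X * (\<Sum>j<n. fps_const (tT i j) * Fv n j)) m"
    by (cases m) (simp_all add: Fv_def phi_0 phi_Suc fps_sum_nth)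
qed

lemma fps_sys_unique:
  assumes "\<And>i. i < n \<Longrightarrow> C i = fps_X * (\<Sum>j<n. fps_const (t i j) * C j)"
  shows "i < n \<Longrightarrow> C i = (0 :: 'a::comm_ring_1 fps)"
proof -
  have "\<forall>i<n. fps_nth (C i) m = 0" for m
  proof (induction m)
    case 0
    show ?case
    proof (intro allI impI)
      fix i assume "i < n"
      then show "fps_nth (C i) 0 = 0" by (subst assms[OF \<open>i < n\<close>]) simp
    qed
  next
    case (Suc m)
    show ?case
    proof (intro allI impI)
      fix i assume "i < n"
      then show "fps_nth (C i) (Suc m) = 0" using Suc by (subst assms[OF \<open>i < n\<close>]) (simp add: fps_sum_nth)
    qed
  qed
  then show "i < n \<Longrightarrow> C i = 0" by (intro fps_ext) simp
qed


lemma Evf_Suc: "Evf (Suc n) = Evf n + fps_X * fps_const (Var n) * Odf n"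
proof (rule fps_ext)
  fix m show "fps_nth (Evf (Suc n)) m = fps_nth (Evf n + fps_X * fps_const (Var n) * Odf n) m"
    by (cases m) (simp_all add: Evf_def Odf_def esym_0 esym_Suc mult.assoc)
qed

lemma Odf_Suc: "Odf (Suc n) = Odf n + fps_X * fps_const (Var n) * Evf n"
proof (rule fps_ext)
  fix m show "fps_nth (Odf (Suc n)) m = fps_nth (Odf n + fps_X * fps_const (Var n) * Evf n) m"
    by (cases m) (simp_all add: Evf_def Odf_def esym_0 esym_Suc mult.assoc)
qed

lemma Fv_Suc_split:
  "Fv (Suc n) i = 1 + fps_X * (\<Sum>j<n. fps_const (tT i j) * Fv (Suc n) j) + fps_X * fps_const (tT i n) * Fv (Suc n) n"
  by (subst Fv_eq) (simp add: algebra_simps)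

lemma step_c1:
  fixes n i :: nat
  defines "a \<equiv> fps_X * fps_const (Var n)"
  defines "u \<equiv> 1 + a * Fv (Suc n) n"
  assumes "i < n"
  shows "Fv (Suc n) i = u * Fv n i"
proof -
  define C where "C i = Fv (Suc n) i - u * Fv n i" for i
  have "C i = fps_X * (\<Sum>j<n. fps_const (tT i j) * C j)" if "i < n" for i
  proof -
    have t: "tT i n = Var n" using that by (simp add: tT_def)
    have "C i = (1 + fps_X * (\<Sum>j<n. fps_const (tT i j) * Fv (Suc n) j) + a * Fv (Suc n) n)
               - u * (1 + fps_X * (\<Sum>j<n. fps_const (tT i j) * Fv n j))"
      unfolding C_def by (subst Fv_Suc_split, subst Fv_eq) (simp add: t a_def)
    also have "\<dots> = fps_X * ((\<Sum>j<n. fps_const (tT i j) * Fv (Suc n) j) - (\<Sum>j<n. fps_const (tT i j) * (u * Fv n j)))"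
      by (simp add: u_def sum_distrib_left algebra_simps)
    also have "(\<Sum>j<n. fps_const (tT i j) * Fv (Suc n) j) - (\<Sum>j<n. fps_const (tT i j) * (u * Fv n j))
             = (\<Sum>j<n. fps_const (tT i j) * C j)"
      by (simp add: C_def sum_subtractf right_diff_distrib)
    finally show ?thesis .
  qed
  then have "C i = 0" using fps_sys_unique[of n C tT i] assms(3) by blast
  then show ?thesis by (simp add: C_def)
qed

lemma step_c2:
  fixes n :: nat
  defines "a \<equiv> fps_X * fps_const (Var n)"
  defines "u \<equiv> 1 + a * Fv (Suc n) n"
  shows "Fv (Suc n) n = 1 - u * (fps_X * Zs n)"
proof -
  have t1: "tT n j = - Var j" if "j < n" for j using that by (simp add: tT_def)
  have t2: "tT n n = 0" by (simp add: tT_def)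
  have "(\<Sum>j<n. fps_const (tT n j) * Fv (Suc n) j) = (\<Sum>j<n. - (u * (fps_const (Var j) * Fv n j)))"
  proof (intro sum.cong refl)
    fix j assume "j \<in> {..<n}"
    then have j: "j < n" by simp
    have c: "fps_const (tT n j) = - fps_const (Var j)" using t1[OF j] by simp
    have f: "Fv (Suc n) j = u * Fv n j" unfolding u_def a_def by (rule step_c1[OF j])
    show "fps_const (tT n j) * Fv (Suc n) j = - (u * (fps_const (Var j) * Fv n j))"
      unfolding c f by (metis mult.left_commute mult_minus_left mult_minus_right)
  qed
  also have "\<dots> = - (u * Zs n)" by (simp add: Zs_def sum_negf sum_distrib_left)
  finally have s: "(\<Sum>j<n. fps_const (tT n j) * Fv (Suc n) j) = - (u * Zs n)" .
  show ?thesis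
    apply (subst Fv_Suc_split)
    apply (simp only: s t2)
    apply (simp add: algebra_simps)
    done
qed

lemma step_c3:
  fixes n :: nat
  defines "a \<equiv> fps_X * fps_const (Var n)"
  defines "u \<equiv> 1 + a * Fv (Suc n) n"
  shows "Zs (Suc n) = u * Zs n + fps_const (Var n) * Fv (Suc n) n"
proof -
  have "Zs (Suc n) = (\<Sum>i<n. fps_const (Var i) * Fv (Suc n) i) + fps_const (Var n) * Fv (Suc n) n"
    by (simp add: Zs_def)
  also have "(\<Sum>i<n. fps_const (Var i) * Fv (Suc n) i) = (\<Sum>i<n. u * (fps_const (Var i) * Fv n i))"
  proof (intro sum.cong refl)
    fix i assume "i \<in> {..<n}"
    then have "Fv (Suc n) i = u * Fv n i" unfolding u_def a_def by (intro step_c1) simp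
    then show "fps_const (Var i) * Fv (Suc n) i = u * (fps_const (Var i) * Fv n i)"
      by (simp add: mult.left_commute)
  qed
  also have "\<dots> = u * Zs n" by (simp add: Zs_def sum_distrib_left)
  finally show ?thesis .
qed

lemma key_identity: "Evf n * (fps_X * Zs n) = Odf n"
proof (induction n)
  case 0
  have "Odf 0 = 0"
  proof (rule fps_ext)
    fix m show "fps_nth (Odf 0) m = fps_nth 0 m"
      by (cases m) (simp_all add: Odf_def esym_big)
  qed
  then show ?case by (simp add: Zs_def)
next
  case (Suc n)
  define a where "a = fps_X * fps_const (Var n)"
  define w where "w = Fv (Suc n) n"
  define u where "u = 1 + a * w"
  define Ev where "Ev = Evf n"
  define Od where "Od = Odf n"
  define Yb where "Yb = fps_X * Zs n"
  have h1: "Ev * Yb = Od" using Suc by (simp add: Ev_def Yb_def Od_def)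
  have h2: "w = 1 - u * Yb" using step_c2[of n] by (simp add: w_def u_def a_def Yb_def)
  have h3: "fps_X * Zs (Suc n) = u * Yb + a * w"
    using step_c3[of n] by (simp add: w_def u_def a_def Yb_def algebra_simps)
  have E: "Evf (Suc n) = Ev + a * Od" by (simp add: Evf_Suc Ev_def Od_def a_def)
  have OdS: "Odf (Suc n) = Od + a * Ev" by (simp add: Odf_Suc Ev_def Od_def a_def)
  have e1: "u * Yb = 1 - w" using h2 by (simp add: algebra_simps)
  have e2: "w * Ev = Ev - u * Od"
  proof -
    have "w * Ev = (1 - u * Yb) * Ev" using h2 by simp
    also have "\<dots> = Ev - u * (Ev * Yb)" by (simp add: algebra_simps)
    finally show ?thesis using h1 by simp
  qed
  have "(Ev + a * Od) * (u * Yb + a * w) = u * (Ev * Yb) + a * Od * (u * Yb) + a * (w * Ev) + a * a * w * Od"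
    by (simp add: algebra_simps)
  also have "\<dots> = u * Od + a * Od * (1 - w) + a * (Ev - u * Od) + a * a * w * Od"
    using h1 e1 e2 by simp
  also have "\<dots> = Od + a * Ev"
    by (simp add: u_def algebra_simps)
  finally show ?case using E OdS h3 by simp
qed


lemma two_Const: "(2 :: 'v mpoly) = Const 2"
  by (simp add: Const_def)

lemma zz_eq: "zz n m = (\<Sum>i<n. Var i * phi n m i)"
proof -
  have h: "Const (1/2) * (2 :: nat mpoly) = 1"
    unfolding two_Const Const_mult[symmetric] by simp
  have "zz n m = (\<Sum>i<n. (Const (1/2) * 2) * (phi n m i * Var i))"
    unfolding zz_def anticomm_def sum_distrib_left phi_0 by (simp add: mult.assoc)
  also have "\<dots> = (\<Sum>i<n. Var i * phi n m i)" unfolding h by (simp add: mult.commute)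
  finally show ?thesis .
qed

lemma Zs_nth: "fps_nth (Zs n) m = zz n m"
  by (simp add: Zs_def fps_sum_nth zz_eq Fv_def)

lemma sum_even:
  fixes k :: nat
  assumes "\<And>i. odd i \<Longrightarrow> f i = (0::'a::comm_monoid_add)"
  shows "(\<Sum>i\<le>2*k+1. f i) = (\<Sum>j\<le>k. f (2*j))"
proof (induction k)
  case 0
  have "(\<Sum>i\<le>1. f i) = f 0 + f 1" by (simp add: atMost_Suc add_ac)
  then show ?case using assms[of 1] by simp
next
  case (Suc k)
  have "(\<Sum>i\<le>2*Suc k+1. f i) = (\<Sum>i\<le>2*k+1. f i) + f (2*k+2) + f (2*k+3)"
    by (simp add: atMost_Suc add_ac eval_nat_numeral)
  moreover have "f (2*k+3) = 0" by (rule assms) simp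
  moreover have "(\<Sum>j\<le>Suc k. f (2*j)) = (\<Sum>j\<le>k. f (2*j)) + f (2*k+2)"
    by (simp add: atMost_Suc add_ac)
  ultimately show ?case using Suc.IH by simp
qed

lemma esym_rec:
  "esym n (2*k+1) = (\<Sum>j\<le>k. esym n (2*j) * zz n (2*k - 2*j))"
proof -
  have "esym n (2*k+1) = fps_nth (Odf n) (2*k+1)" by (simp add: Odf_def)
  also have "\<dots> = fps_nth (Evf n * (fps_X * Zs n)) (2*k+1)" by (simp add: key_identity)
  also have "\<dots> = (\<Sum>i\<le>2*k+1. fps_nth (Evf n) i * fps_nth (fps_X * Zs n) (2*k+1 - i))"
    by (simp add: fps_mult_nth atLeast0AtMost)
  also have "\<dots> = (\<Sum>j\<le>k. fps_nth (Evf n) (2*j) * fps_nth (fps_X * Zs n) (2*k+1 - 2*j))"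
    by (rule sum_even) (simp add: Evf_def)
  also have "\<dots> = (\<Sum>j\<le>k. esym n (2*j) * zz n (2*k - 2*j))"
  proof (intro sum.cong refl)
    fix j assume "j \<in> {..k}"
    then have "2*k+1 - 2*j = Suc (2*k - 2*j)" by auto
    then show "fps_nth (Evf n) (2*j) * fps_nth (fps_X * Zs n) (2*k+1 - 2*j) = esym n (2*j) * zz n (2*k - 2*j)"
      by (simp add: Evf_def Zs_nth)
  qed
  finally show ?thesis .
qed




definition th :: "nat \<Rightarrow> (nat + nat) mpoly" where
  "th j = (if even j then Var (Inr (j div 2))
           else Var (Inl (j div 2)) + (\<Sum>i\<in>{1..j div 2}. Var (Inr i) * Var (Inl (j div 2 - i))))"

definition gg :: "nat \<Rightarrow> (nat + nat) \<Rightarrow> nat mpoly" where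
  "gg n = (\<lambda>v. case v of Inl k \<Rightarrow> zz n (2*k) | Inr k \<Rightarrow> esym n (2*k))"

definition VV :: "nat \<Rightarrow> (nat + nat) set" where
  "VV n = Inl ` {0..(n-1) div 2} \<union> Inr ` {1..n div 2}"

lemma subst_th: "subst (gg n) (th j) = esym n j"
proof (cases "even j")
  case True
  then show ?thesis by (simp add: th_def gg_def)
next
  case False
  define k where "k = j div 2"
  have j: "j = 2*k+1" using False unfolding k_def by presburger
  have "subst (gg n) (th j) = zz n (2*k) + (\<Sum>i\<in>{1..k}. esym n (2*i) * zz n (2*(k-i)))"
    using False unfolding th_def k_def[symmetric]
    by (simp add: subst_add subst_sum subst_mult gg_def)
  also have "\<dots> = (\<Sum>i\<le>k. esym n (2*i) * zz n (2*k - 2*i))"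
  proof -
    have "{..k} = insert 0 {1..k}" by auto
    then show ?thesis by (simp add: esym_0 diff_mult_distrib2)
  qed
  also have "\<dots> = esym n j" using esym_rec[of n k] j by simp
  finally show ?thesis .
qed

lemma vars_th: "j \<in> {1..n} \<Longrightarrow> vars (th j) \<subseteq> VV n"
proof (cases "even j")
  case True
  assume "j \<in> {1..n}"
  then have "j div 2 \<in> {1..n div 2}" using True by (auto elim!: evenE)
  then show ?thesis using True by (simp add: th_def VV_def)
next
  case False
  assume jn: "j \<in> {1..n}"
  define k where "k = j div 2"
  have j: "j = 2*k+1" using False unfolding k_def by presburger
  have kb: "k \<le> (n-1) div 2" using jn j by auto
  have thj: "th j = Var (Inl k) + (\<Sum>i\<in>{1..k}. Var (Inr i) * Var (Inl (k - i)))"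
    using False unfolding th_def k_def[symmetric] by simp
  have "vars (th j) \<subseteq> vars (Var (Inl k)) \<union> vars (\<Sum>i\<in>{1..k}. Var (Inr i) * Var (Inl (k - i)))"
    unfolding thj by (rule vars_add)
  also have "\<dots> \<subseteq> VV n"
  proof -
    have "vars (Var (Inl k) :: (nat+nat) mpoly) \<subseteq> VV n" using kb by (simp add: VV_def)
    moreover have "vars (\<Sum>i\<in>{1..k}. Var (Inr i) * Var (Inl (k - i))) \<subseteq> VV n"
    proof (rule order.trans[OF vars_sum], rule UN_least)
      fix i assume i: "i \<in> {1..k}"
      have "vars (Var (Inr i) * Var (Inl (k - i)) :: (nat+nat) mpoly) \<subseteq> {Inr i, Inl (k - i)}"
        using vars_mult[of "Var (Inr i)" "Var (Inl (k - i))"] by auto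
      also have "\<dots> \<subseteq> VV n" using i kb jn j unfolding VV_def by auto
      finally show "vars (Var (Inr i) * Var (Inl (k - i))) \<subseteq> VV n" .
    qed
    ultimately show ?thesis by simp
  qed
  finally show ?thesis .
qed

lemma th_psi: "vars r \<subseteq> {1..n} \<Longrightarrow> subst (gg n) (subst th r) = subst (esym n) r"
  unfolding subst_subst by (rule subst_cong) (simp add: subst_th)

lemma vars_subst_th: "vars r \<subseteq> {1..n} \<Longrightarrow> vars (subst th r) \<subseteq> VV n"
proof -
  assume a: "vars r \<subseteq> {1..n}"
  have "(\<Union>j\<in>vars r. vars (th j)) \<subseteq> VV n"
  proof (rule UN_least)
    fix j assume "j \<in> vars r"
    then have "j \<in> {1..n}" using a by auto
    then show "vars (th j) \<subseteq> VV n" by (rule vars_th)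
  qed
  then show ?thesis by (rule order.trans[OF vars_subst])
qed

lemma th_Inl:
  assumes n1: "n \<ge> 1"
  shows "k \<le> (n-1) div 2 \<Longrightarrow> \<exists>r. vars r \<subseteq> {1..n} \<and> subst th r = Var (Inl k)"
proof (induction k rule: less_induct)
  case (less k)
  define R where "R k' = (SOME r. vars r \<subseteq> {1..n} \<and> subst th r = Var (Inl k'))" for k'
  have R: "vars (R k') \<subseteq> {1..n} \<and> subst th (R k') = Var (Inl k')" if "k' < k" for k'
  proof -
    have "k' \<le> (n-1) div 2" using that less.prems by simp
    then have "\<exists>r. vars r \<subseteq> {1..n} \<and> subst th r = Var (Inl k')" by (rule less.IH[OF that])
    then show ?thesis unfolding R_def by (rule someI_ex)
  qed
  define r where "r = Var (2*k+1) - (\<Sum>i\<in>{1..k}. Var (2*i) * R (k - i))"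
  have "subst th r = th (2*k+1) - (\<Sum>i\<in>{1..k}. th (2*i) * subst th (R (k - i)))"
    by (simp add: r_def subst_diff subst_sum subst_mult)
  also have "(\<Sum>i\<in>{1..k}. th (2*i) * subst th (R (k - i))) = (\<Sum>i\<in>{1..k}. Var (Inr i) * Var (Inl (k - i)))"
    by (intro sum.cong refl) (auto simp: th_def R)
  also have "th (2*k+1) = Var (Inl k) + (\<Sum>i\<in>{1..k}. Var (Inr i) * Var (Inl (k - i)))"
    by (simp add: th_def)
  finally have "subst th r = Var (Inl k)" by simp
  moreover have "vars r \<subseteq> {1..n}"
  proof -
    have "2*k+1 \<le> n" using less.prems n1 by presburger
    have "vars (Var (2*k+1) :: nat mpoly) \<subseteq> {1..n}" using \<open>2*k+1 \<le> n\<close> by simp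
    moreover have "vars (\<Sum>i\<in>{1..k}. Var (2*i) * R (k - i)) \<subseteq> {1..n}"
    proof (rule order.trans[OF vars_sum], rule UN_least)
      fix i assume i: "i \<in> {1..k}"
      have "vars (Var (2*i) * R (k - i)) \<subseteq> vars (Var (2*i) :: nat mpoly) \<union> vars (R (k - i))" by (rule vars_mult)
      also have "\<dots> \<subseteq> {1..n}" using R[of "k - i"] i \<open>2*k+1 \<le> n\<close> by auto
      finally show "vars (Var (2*i) * R (k - i)) \<subseteq> {1..n}" .
    qed
    ultimately show ?thesis unfolding r_def using vars_diff by (meson le_sup_iff order_trans)
  qed
  ultimately show ?case by blast
qed

lemma th_onto:
  assumes "vars q \<subseteq> VV n" and n1: "n \<ge> 1"
  shows "\<exists>r. vars r \<subseteq> {1..n} \<and> subst th r = q"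
proof (rule generation[OF _ assms(1)])
  fix v assume "v \<in> VV n"
  then consider (l) k where "v = Inl k" "k \<le> (n-1) div 2" | (r) k where "v = Inr k" "k \<in> {1..n div 2}"
    unfolding VV_def by auto
  then show "\<exists>r. vars r \<subseteq> {1..n} \<and> subst th r = Var v"
  proof cases
    case l then show ?thesis using th_Inl[OF n1] by simp
  next
    case r
    then have "vars (Var (2*k) :: nat mpoly) \<subseteq> {1..n}" "subst th (Var (2*k)) = Var v"
      by (auto simp: th_def)
    then show ?thesis by blast
  qed
qed

theorem corollary5p6:
  fixes n :: nat
  assumes "n \<ge> 1"
  shows "inj_on (subst (\<lambda>v. case v of Inl k \<Rightarrow> zz n (2*k) | Inr k \<Rightarrow> esym n (2*k)))
            {q :: (nat + nat) mpoly. vars q \<subseteq> Inl ` {0..(n-1) div 2} \<union> Inr ` {1..n div 2}}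
       \<and> subst (\<lambda>v. case v of Inl k \<Rightarrow> zz n (2*k) | Inr k \<Rightarrow> esym n (2*k))
            ` {q :: (nat + nat) mpoly. vars q \<subseteq> Inl ` {0..(n-1) div 2} \<union> Inr ` {1..n div 2}}
         = sym_polys n"
proof -
  have G: "(\<lambda>v. case v of Inl k \<Rightarrow> zz n (2*k) | Inr k \<Rightarrow> esym n (2*k)) = gg n" by (simp add: gg_def)
  have V: "Inl ` {0..(n-1) div 2} \<union> Inr ` {1..n div 2} = VV n" by (simp add: VV_def)
  have inj: "inj_on (subst (gg n)) {q. vars q \<subseteq> VV n}"
  proof (rule inj_onI)
    fix q1 q2 assume q1: "q1 \<in> {q. vars q \<subseteq> VV n}" and q2: "q2 \<in> {q. vars q \<subseteq> VV n}"
      and eq: "subst (gg n) q1 = subst (gg n) q2"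
    obtain r1 where r1: "vars r1 \<subseteq> {1..n}" "subst th r1 = q1" using th_onto q1 assms by blast
    obtain r2 where r2: "vars r2 \<subseteq> {1..n}" "subst th r2 = q2" using th_onto q2 assms by blast
    have "subst (esym n) r1 = subst (esym n) r2" using eq r1 r2 th_psi by metis
    then have "subst (esym n) (r1 - r2) = 0" by (simp add: subst_diff)
    moreover have "vars (r1 - r2) \<subseteq> {1..n}" using vars_diff[of r1 r2] r1(1) r2(1) by auto
    ultimately have "r1 - r2 = 0" using psi_zero by blast
    then show "q1 = q2" using r1(2) r2(2) by simp
  qed
  have img: "subst (gg n) ` {q. vars q \<subseteq> VV n} = sym_polys n"
  proof
    show "subst (gg n) ` {q. vars q \<subseteq> VV n} \<subseteq> sym_polys n"
    proof
      fix p assume "p \<in> subst (gg n) ` {q. vars q \<subseteq> VV n}"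
      then obtain q where q: "vars q \<subseteq> VV n" "p = subst (gg n) q" by auto
      obtain r where r: "vars r \<subseteq> {1..n}" "subst th r = q" using th_onto q(1) assms by blast
      have "p = subst (esym n) r" using q(2) r th_psi by metis
      then show "p \<in> sym_polys n" using psi_sym by simp
    qed
  next
    show "sym_polys n \<subseteq> subst (gg n) ` {q. vars q \<subseteq> VV n}"
    proof
      fix p assume "p \<in> sym_polys n"
      then obtain r where r: "vars r \<subseteq> {1..n}" "subst (esym n) r = p" using ftsp_exists by blast
      have "p = subst (gg n) (subst th r)" using r th_psi by metis
      moreover have "subst th r \<in> {q. vars q \<subseteq> VV n}" using vars_subst_th[OF r(1)] by simp
      ultimately show "p \<in> subst (gg n) ` {q. vars q \<subseteq> VV n}" by blast
    qed
  qed
  show ?thesis unfolding G V using inj img by simp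
qed


end
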